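(* In the setting described in the context, for all $\lambda>0$ and all $t\ge0$: if $R_{t\infty}>0$ then $L^{(\lambda)}_{t\infty}=\infty$, whereas if $L^{(\lambda)}_{t\infty}<\infty$ then $R_{t\infty}=0$.
   Context: Let $(\Omega,\mathcal F,\mathbb P)$ be a probability space with a filtration $\{\mathcal F_t\}_{t\ge0}$ satisfying the usual conditions; (in)equalities between random variables hold a.s. A pricing kernel is an $\{\mathcal F_t\}$-adapted càdlàg semimartingale $\{\pi_t\}_{t\ge0}$ with (a) $\pi_t>0$, (b) $\mathbb E[\pi_t]<\infty$ for all $t\ge0$, (c) $\liminf_{t\to\infty}\mathbb E[\pi_t]=0$. Fix such a pricing kernel and set $P_{tT}=\pi_t^{-1}\mathbb E[\pi_T\mid\mathcal F_t]$ for $0\le t<T$. Define the exponential rate $R_{tT}=-(T-t)^{-1}\ln P_{tT}$ and, for $\lambda>0$, the tail-Pareto rate $L^{(\lambda)}_{tT}$ by $P_{tT}=\left[1+\lambda^{-1}(T-t)L^{(\lambda)}_{tT}\right]^{-\lambda}$, i.e. $L^{(\lambda)}_{tT}=\lambda(T-t)^{-1}(P_{tT}^{-1/\lambda}-1)$. For a family $\{A_x\}_{x\in\mathbb R^+}$ of $\mathcal F_t$-measurable extended-real random variables, $\limsup_{x\to\infty}A_x:=\operatorname{ess\,inf}_{x}\operatorname{ess\,sup}_{y\ge x}A_y$, with essential supremum/infimum taken among $\mathcal F_t$-measurable random variables. The long rates are $R_{t\infty}=\limsup_{T\to\infty}R_{tT}$ and $L^{(\lambda)}_{t\infty}=\limsup_{T\to\infty}L^{(\lambda)}_{tT}$.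 *)

theory Defs
  imports "HOL-Probability.Probability"
begin

text \<open>Time is real, only t \<ge> 0 matters. A filtration F on the probability space M
satisfying the usual conditions (right-continuous, complete).\<close>

definition usual_conditions :: "'a measure \<Rightarrow> (real \<Rightarrow> 'a measure) \<Rightarrow> bool" where
  "usual_conditions M F \<longleftrightarrow>
     (\<forall>t\<ge>0. subalgebra M (F t)) \<and>
     (\<forall>s t. 0 \<le> s \<longrightarrow> s \<le> t \<longrightarrow> sets (F s) \<subseteq> sets (F t)) \<and>
     (\<forall>t\<ge>0. sets (F t) = (\<Inter>s\<in>{t<..}. sets (F s))) \<and>
     (\<forall>A. A \<subseteq> space M \<longrightarrow> (\<exists>N\<in>null_sets M. A \<subseteq> N) \<longrightarrow> A \<in> sets (F 0))"

definition adapted :: "(real \<Rightarrow> 'a measure) \<Rightarrow> (real \<Rightarrow> 'a \<Rightarrow> real) \<Rightarrow> bool" where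
  "adapted F X \<longleftrightarrow> (\<forall>t\<ge>0. X t \<in> borel_measurable (F t))"

definition cadlag :: "'a measure \<Rightarrow> (real \<Rightarrow> 'a \<Rightarrow> real) \<Rightarrow> bool" where
  "cadlag M X \<longleftrightarrow> (\<forall>\<omega>\<in>space M. \<forall>t\<ge>0.
      continuous (at_right t) (\<lambda>s. X s \<omega>) \<and>
      (t > 0 \<longrightarrow> (\<exists>l. ((\<lambda>s. X s \<omega>) \<longlongrightarrow> l) (at_left t))))"

definition martingale :: "'a measure \<Rightarrow> (real \<Rightarrow> 'a measure) \<Rightarrow> (real \<Rightarrow> 'a \<Rightarrow> real) \<Rightarrow> bool" where
  "martingale M F X \<longleftrightarrow> adapted F X \<and> (\<forall>t\<ge>0. integrable M (X t)) \<and>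
     (\<forall>s t. 0 \<le> s \<longrightarrow> s \<le> t \<longrightarrow> (AE \<omega> in M. real_cond_exp M (F s) (X t) \<omega> = X s \<omega>))"

definition ext_stopping_time :: "'a measure \<Rightarrow> (real \<Rightarrow> 'a measure) \<Rightarrow> ('a \<Rightarrow> ereal) \<Rightarrow> bool" where
  "ext_stopping_time M F \<tau> \<longleftrightarrow> (\<forall>\<omega>\<in>space M. 0 \<le> \<tau> \<omega>) \<and>
     (\<forall>t\<ge>0. {\<omega>\<in>space M. \<tau> \<omega> \<le> ereal t} \<in> sets (F t))"

definition stopped :: "(real \<Rightarrow> 'a \<Rightarrow> real) \<Rightarrow> ('a \<Rightarrow> ereal) \<Rightarrow> real \<Rightarrow> 'a \<Rightarrow> real" where
  "stopped X \<tau> = (\<lambda>t \<omega>. X (real_of_ereal (min (ereal t) (\<tau> \<omega>))) \<omega>)"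

definition local_martingale :: "'a measure \<Rightarrow> (real \<Rightarrow> 'a measure) \<Rightarrow> (real \<Rightarrow> 'a \<Rightarrow> real) \<Rightarrow> bool" where
  "local_martingale M F X \<longleftrightarrow> adapted F X \<and> cadlag M X \<and>
     (\<exists>\<tau> :: nat \<Rightarrow> 'a \<Rightarrow> ereal. (\<forall>n. ext_stopping_time M F (\<tau> n)) \<and>
        (\<forall>n. \<forall>\<omega>\<in>space M. \<tau> n \<omega> \<le> \<tau> (Suc n) \<omega>) \<and>
        (AE \<omega> in M. (\<lambda>n. \<tau> n \<omega>) \<longlonglongrightarrow> \<infinity>) \<and>
        (\<forall>n. martingale M F (stopped X (\<tau> n))))"

definition finite_variation_on :: "(real \<Rightarrow> real) \<Rightarrow> real \<Rightarrow> bool" where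
  "finite_variation_on f t \<longleftrightarrow> (\<exists>C. \<forall>(n::nat) (s::nat \<Rightarrow> real).
      0 \<le> s 0 \<longrightarrow> s n \<le> t \<longrightarrow> (\<forall>i<n. s i \<le> s (Suc i)) \<longrightarrow>
      (\<Sum>i<n. \<bar>f (s (Suc i)) - f (s i)\<bar>) \<le> C)"

definition fv_process :: "'a measure \<Rightarrow> (real \<Rightarrow> 'a measure) \<Rightarrow> (real \<Rightarrow> 'a \<Rightarrow> real) \<Rightarrow> bool" where
  "fv_process M F A \<longleftrightarrow> adapted F A \<and> cadlag M A \<and>
     (\<forall>\<omega>\<in>space M. \<forall>t\<ge>0. finite_variation_on (\<lambda>s. A s \<omega>) t)"

definition semimartingale :: "'a measure \<Rightarrow> (real \<Rightarrow> 'a measure) \<Rightarrow> (real \<Rightarrow> 'a \<Rightarrow> real) \<Rightarrow> bool" where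
  "semimartingale M F X \<longleftrightarrow> adapted F X \<and> cadlag M X \<and>
     (\<exists>N A. local_martingale M F N \<and> fv_process M F A \<and>
        (\<forall>\<omega>\<in>space M. N 0 \<omega> = 0 \<and> A 0 \<omega> = 0) \<and>
        (\<forall>t\<ge>0. \<forall>\<omega>\<in>space M. X t \<omega> = X 0 \<omega> + N t \<omega> + A t \<omega>))"

definition pricing_kernel :: "'a measure \<Rightarrow> (real \<Rightarrow> 'a measure) \<Rightarrow> (real \<Rightarrow> 'a \<Rightarrow> real) \<Rightarrow> bool" where
  "pricing_kernel M F \<pi> \<longleftrightarrow> adapted F \<pi> \<and> cadlag M \<pi> \<and> semimartingale M F \<pi> \<and>
     (\<forall>t\<ge>0. AE \<omega> in M. \<pi> t \<omega> > 0) \<and>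
     (\<forall>t\<ge>0. integrable M (\<pi> t)) \<and>
     Liminf at_top (\<lambda>t. ereal (integral\<^sup>L M (\<pi> t))) = 0"

definition bond :: "'a measure \<Rightarrow> (real \<Rightarrow> 'a measure) \<Rightarrow> (real \<Rightarrow> 'a \<Rightarrow> real) \<Rightarrow> real \<Rightarrow> real \<Rightarrow> 'a \<Rightarrow> real" where
  "bond M F \<pi> t T = (\<lambda>\<omega>. real_cond_exp M (F t) (\<pi> T) \<omega> / \<pi> t \<omega>)"

definition exp_rate :: "'a measure \<Rightarrow> (real \<Rightarrow> 'a measure) \<Rightarrow> (real \<Rightarrow> 'a \<Rightarrow> real) \<Rightarrow> real \<Rightarrow> real \<Rightarrow> 'a \<Rightarrow> real" where
  "exp_rate M F \<pi> t T = (\<lambda>\<omega>. - ln (bond M F \<pi> t T \<omega>) / (T - t))"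

definition pareto_rate :: "'a measure \<Rightarrow> (real \<Rightarrow> 'a measure) \<Rightarrow> (real \<Rightarrow> 'a \<Rightarrow> real) \<Rightarrow> real \<Rightarrow> real \<Rightarrow> real \<Rightarrow> 'a \<Rightarrow> real" where
  "pareto_rate M F \<pi> lam t T =
     (\<lambda>\<omega>. lam / (T - t) * (bond M F \<pi> t T \<omega> powr (- 1 / lam) - 1))"

definition is_ess_sup :: "'a measure \<Rightarrow> 'a measure \<Rightarrow> 'i set \<Rightarrow> ('i \<Rightarrow> 'a \<Rightarrow> ereal) \<Rightarrow> ('a \<Rightarrow> ereal) \<Rightarrow> bool" where
  "is_ess_sup M G I A Y \<longleftrightarrow> Y \<in> borel_measurable G \<and>
     (\<forall>y\<in>I. AE \<omega> in M. A y \<omega> \<le> Y \<omega>) \<and>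
     (\<forall>Z \<in> borel_measurable G. (\<forall>y\<in>I. AE \<omega> in M. A y \<omega> \<le> Z \<omega>) \<longrightarrow> (AE \<omega> in M. Y \<omega> \<le> Z \<omega>))"

definition is_ess_inf :: "'a measure \<Rightarrow> 'a measure \<Rightarrow> 'i set \<Rightarrow> ('i \<Rightarrow> 'a \<Rightarrow> ereal) \<Rightarrow> ('a \<Rightarrow> ereal) \<Rightarrow> bool" where
  "is_ess_inf M G I A Y \<longleftrightarrow> Y \<in> borel_measurable G \<and>
     (\<forall>y\<in>I. AE \<omega> in M. Y \<omega> \<le> A y \<omega>) \<and>
     (\<forall>Z \<in> borel_measurable G. (\<forall>y\<in>I. AE \<omega> in M. Z \<omega> \<le> A y \<omega>) \<longrightarrow> (AE \<omega> in M. Z \<omega> \<le> Y \<omega>))"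

definition fam_ess_sup :: "'a measure \<Rightarrow> 'a measure \<Rightarrow> 'i set \<Rightarrow> ('i \<Rightarrow> 'a \<Rightarrow> ereal) \<Rightarrow> 'a \<Rightarrow> ereal" where
  "fam_ess_sup M G I A = (SOME Y. is_ess_sup M G I A Y)"

definition fam_ess_inf :: "'a measure \<Rightarrow> 'a measure \<Rightarrow> 'i set \<Rightarrow> ('i \<Rightarrow> 'a \<Rightarrow> ereal) \<Rightarrow> 'a \<Rightarrow> ereal" where
  "fam_ess_inf M G I A = (SOME Y. is_ess_inf M G I A Y)"

definition fam_ess_limsup :: "'a measure \<Rightarrow> 'a measure \<Rightarrow> real set \<Rightarrow> (real \<Rightarrow> 'a \<Rightarrow> ereal) \<Rightarrow> 'a \<Rightarrow> ereal" where
  "fam_ess_limsup M G D A = fam_ess_inf M G {0..} (\<lambda>x. fam_ess_sup M G {y\<in>D. x \<le> y} A)"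

definition long_exp_rate :: "'a measure \<Rightarrow> (real \<Rightarrow> 'a measure) \<Rightarrow> (real \<Rightarrow> 'a \<Rightarrow> real) \<Rightarrow> real \<Rightarrow> 'a \<Rightarrow> ereal" where
  "long_exp_rate M F \<pi> t =
     fam_ess_limsup M (F t) {t<..} (\<lambda>T \<omega>. ereal (exp_rate M F \<pi> t T \<omega>))"

definition long_pareto_rate :: "'a measure \<Rightarrow> (real \<Rightarrow> 'a measure) \<Rightarrow> (real \<Rightarrow> 'a \<Rightarrow> real) \<Rightarrow> real \<Rightarrow> real \<Rightarrow> 'a \<Rightarrow> ereal" where
  "long_pareto_rate M F \<pi> lam t =
     fam_ess_limsup M (F t) {t<..} (\<lambda>T \<omega>. ereal (pareto_rate M F \<pi> lam t T \<omega>))"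

end

theory Submission
  imports Defs
begin


definition gtr :: "ereal \<Rightarrow> real" where
  "gtr z = arctan (real_of_ereal z) + (if z = \<infinity> then pi/2 else if z = -\<infinity> then -pi/2 else 0)"

lemma gtr_strict: "z < w \<Longrightarrow> gtr z < gtr w"
  apply (cases z; cases w)
  using arctan_ubound arctan_lbound arctan_less_iff
  by (auto simp: gtr_def)

lemma gtr_mono: "z \<le> w \<Longrightarrow> gtr z \<le> gtr w"
  using gtr_strict by (metis order_le_less)

lemma gtr_inj: "gtr z = gtr w \<Longrightarrow> z = w"
  using gtr_strict by (metis less_irrefl linorder_neqE)

lemma gtr_bound: "\<bar>gtr z\<bar> \<le> pi/2"
proof (cases z)
  case (real r)
  then show ?thesis using arctan_ubound[of r] arctan_lbound[of r] by (simp add: gtr_def abs_le_iff)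
qed (auto simp: gtr_def)

lemma gtr_le: "gtr z \<le> pi/2"
  using gtr_bound[of z] by linarith

lemma gtr_meas[measurable]: "gtr \<in> borel_measurable borel"
  unfolding gtr_def by measurable

lemma ess_sup_exists:
  fixes A :: "'i \<Rightarrow> 'a \<Rightarrow> ereal"
  assumes P: "prob_space M" and sub: "subalgebra M G"
    and meas: "\<And>i. i \<in> I \<Longrightarrow> A i \<in> borel_measurable G"
  shows "\<exists>Y. is_ess_sup M G I A Y"
proof -
  interpret prob_space M by (rule P)
  define gY where "gY J = (\<integral>\<omega>. gtr (SUP j\<in>J. A j \<omega>) \<partial>M)" for J
  have measG: "(\<lambda>\<omega>. SUP j\<in>J. A j \<omega>) \<in> borel_measurable G" if "J \<subseteq> I" "countable J" for J
    using that meas by (intro borel_measurable_SUP) auto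
  have measM: "(\<lambda>\<omega>. SUP j\<in>J. A j \<omega>) \<in> borel_measurable M" if "J \<subseteq> I" "countable J" for J
    using measurable_from_subalg[OF sub measG[OF that]] .
  have intg: "integrable M (\<lambda>\<omega>. gtr (SUP j\<in>J. A j \<omega>))" if "J \<subseteq> I" "countable J" for J
    using measM[OF that] gtr_bound
    by (intro integrable_const_bound[where B="pi/2"]) auto
  have gbd: "gY J \<le> pi/2" if "J \<subseteq> I" "countable J" for J
  proof -
    have "gY J \<le> (\<integral>\<omega>. pi/2 \<partial>M)"
      unfolding gY_def using intg[OF that] gtr_le
      by (intro integral_mono) auto
    then show ?thesis by (simp add: prob_space)
  qed
  define C where "C = {gY J | J. J \<subseteq> I \<and> countable J}"
  have Cne: "C \<noteq> {}" unfolding C_def by auto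
  have Cbdd: "bdd_above C" unfolding C_def using gbd by (auto intro!: bdd_aboveI[where M="pi/2"])
  define s where "s = Sup C"
  have upper: "gY J \<le> s" if "J \<subseteq> I" "countable J" for J
    unfolding s_def using that Cbdd by (intro cSup_upper) (auto simp: C_def)
  have "\<forall>n::nat. \<exists>J. J \<subseteq> I \<and> countable J \<and> s - 1 / Suc n < gY J"
  proof
    fix n :: nat
    have "s - 1 / Suc n < Sup C" unfolding s_def by simp
    then obtain c where "c \<in> C" "s - 1 / Suc n < c" using less_cSup_iff[OF Cne Cbdd] by blast
    then show "\<exists>J. J \<subseteq> I \<and> countable J \<and> s - 1 / Suc n < gY J" unfolding C_def by blast
  qed
  then obtain J where J: "\<And>n. J n \<subseteq> I" "\<And>n. countable (J n)" "\<And>n. s - 1 / Suc n < gY (J n)"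
    by metis
  define K where "K = (\<Union>n. J n)"
  have KI: "K \<subseteq> I" and Kc: "countable K" using J unfolding K_def by auto
  define Y where "Y = (\<lambda>\<omega>. SUP j\<in>K. A j \<omega>)"
  have "gY (J n) \<le> gY K" for n
    unfolding gY_def using intg[OF J(1,2)] intg[OF KI Kc]
    by (intro integral_mono gtr_mono SUP_subset_mono) (auto simp: K_def)
  then have ge: "s - 1 / Suc n < gY K" for n using J(3)[of n] by (meson less_le_trans)
  have gYK: "gY K = s"
  proof (rule ccontr)
    assume "gY K \<noteq> s"
    then have "0 < s - gY K" using upper[OF KI Kc] by simp
    then obtain n :: nat where "inverse (Suc n) < s - gY K" using reals_Archimedean by blast
    with ge[of n] show False by (simp add: field_simps)
  qed
  show ?thesis
  proof (intro exI[of _ Y], unfold is_ess_sup_def, intro conjI ballI allI impI)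
    show "Y \<in> borel_measurable G" unfolding Y_def using measG[OF KI Kc] .
  next
    fix i assume iI: "i \<in> I"
    define K' where "K' = insert i K"
    have K'I: "K' \<subseteq> I" and K'c: "countable K'" using KI Kc iI by (auto simp: K'_def)
    define D where "D = (\<lambda>\<omega>. gtr (SUP j\<in>K'. A j \<omega>) - gtr (Y \<omega>))"
    have Dnn: "0 \<le> D \<omega>" for \<omega>
      unfolding D_def Y_def by (auto intro!: gtr_mono SUP_subset_mono simp: K'_def)
    have intD: "integrable M D" unfolding D_def Y_def using intg[OF K'I K'c] intg[OF KI Kc] by auto
    have "integral\<^sup>L M D = gY K' - gY K"
      unfolding D_def gY_def Y_def using intg[OF K'I K'c] intg[OF KI Kc] by simp
    also have "\<dots> \<le> 0" using upper[OF K'I K'c] gYK by simp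
    finally have "integral\<^sup>L M D = 0" using integral_nonneg_AE[of D M] Dnn by (simp add: antisym)
    then have "AE \<omega> in M. D \<omega> = 0" using integral_nonneg_eq_0_iff_AE[OF intD] Dnn by simp
    moreover have "A i \<omega> \<le> Y \<omega>" if "D \<omega> = 0" for \<omega>
    proof -
      from that have "(SUP j\<in>K'. A j \<omega>) = Y \<omega>" unfolding D_def using gtr_inj by simp
      then show "A i \<omega> \<le> Y \<omega>" by (metis K'_def SUP_upper insertI1)
    qed
    ultimately show "AE \<omega> in M. A i \<omega> \<le> Y \<omega>" by (auto elim: eventually_mono)
  next
    fix Z :: "'a \<Rightarrow> ereal"
    assume "Z \<in> borel_measurable G" and up: "\<forall>y\<in>I. AE \<omega> in M. A y \<omega> \<le> Z \<omega>"
    then have "AE \<omega> in M. \<forall>j\<in>K. A j \<omega> \<le> Z \<omega>" using KI Kc by (subst AE_ball_countable) auto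
    then show "AE \<omega> in M. Y \<omega> \<le> Z \<omega>" unfolding Y_def by (auto intro: SUP_least)
  qed
qed



lemma ess_inf_exists:
  fixes A :: "'i \<Rightarrow> 'a \<Rightarrow> ereal"
  assumes P: "prob_space M" and sub: "subalgebra M G"
    and meas: "\<And>i. i \<in> I \<Longrightarrow> A i \<in> borel_measurable G"
  shows "\<exists>Y. is_ess_inf M G I A Y"
proof -
  have "\<And>i. i \<in> I \<Longrightarrow> (\<lambda>\<omega>. - A i \<omega>) \<in> borel_measurable G" by (rule borel_measurable_uminus_ereal[OF meas])
  have "\<exists>Y. is_ess_sup M G I (\<lambda>i \<omega>. - A i \<omega>) Y" by (rule ess_sup_exists[OF P sub]) fact
  then obtain Y where Y: "is_ess_sup M G I (\<lambda>i \<omega>. - A i \<omega>) Y" by (rule exE)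
  have Ym: "Y \<in> borel_measurable G" and Yup: "\<And>y. y\<in>I \<Longrightarrow> AE \<omega> in M. - A y \<omega> \<le> Y \<omega>"
    and Ymin: "\<And>Z. Z \<in> borel_measurable G \<Longrightarrow> (\<forall>y\<in>I. AE \<omega> in M. - A y \<omega> \<le> Z \<omega>) \<Longrightarrow> (AE \<omega> in M. Y \<omega> \<le> Z \<omega>)"
    using Y unfolding is_ess_sup_def by blast+
  show ?thesis
  proof (intro exI[of _ "\<lambda>\<omega>. - Y \<omega>"], unfold is_ess_inf_def, intro conjI ballI allI impI)
    show "(\<lambda>\<omega>. - Y \<omega>) \<in> borel_measurable G" by (rule borel_measurable_uminus_ereal[OF Ym])
  next
    fix y assume "y \<in> I"
    then have "AE \<omega> in M. - A y \<omega> \<le> Y \<omega>" by (rule Yup)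
    moreover have "- Y \<omega> \<le> A y \<omega>" if "- A y \<omega> \<le> Y \<omega>" for \<omega>
      using that by (metis ereal_minus_le_minus ereal_uminus_uminus)
    ultimately show "AE \<omega> in M. - Y \<omega> \<le> A y \<omega>" by (rule eventually_mono)
  next
    fix Z :: "'a \<Rightarrow> ereal"
    assume Zm: "Z \<in> borel_measurable G" and lo: "\<forall>y\<in>I. AE \<omega> in M. Z \<omega> \<le> A y \<omega>"
    have "(\<lambda>\<omega>. - Z \<omega>) \<in> borel_measurable G" by (rule borel_measurable_uminus_ereal[OF Zm])
    moreover have "\<forall>y\<in>I. AE \<omega> in M. - A y \<omega> \<le> - Z \<omega>" using lo by (auto elim!: eventually_mono)
    ultimately have "AE \<omega> in M. Y \<omega> \<le> - Z \<omega>" by (rule Ymin)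
    moreover have "Z \<omega> \<le> - Y \<omega>" if "Y \<omega> \<le> - Z \<omega>" for \<omega>
      using that by (metis ereal_minus_le_minus ereal_uminus_uminus)
    ultimately show "AE \<omega> in M. Z \<omega> \<le> - Y \<omega>" by (rule eventually_mono)
  qed
qed

lemma fam_sup:
  assumes "prob_space M" "subalgebra M G" "\<And>i. i \<in> I \<Longrightarrow> A i \<in> borel_measurable G"
  shows "is_ess_sup M G I A (fam_ess_sup M G I A)"
  unfolding fam_ess_sup_def using ess_sup_exists[OF assms] by (rule someI_ex)

lemma fam_inf:
  assumes "prob_space M" "subalgebra M G" "\<And>i. i \<in> I \<Longrightarrow> A i \<in> borel_measurable G"
  shows "is_ess_inf M G I A (fam_ess_inf M G I A)"
  unfolding fam_ess_inf_def using ess_inf_exists[OF assms] by (rule someI_ex)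



lemma scalar1:
  fixes p s s0 lam c :: real
  assumes p: "p > 0" and s: "s \<ge> s0" "s0 > 0" and lam: "lam > 0" and c: "c > 0"
    and r: "- ln p / s > c"
  shows "lam / s * (p powr (- 1 / lam) - 1) > c + c^2 * s0 / (2 * lam)"
proof -
  define r where "r = - ln p / s"
  have sp: "s > 0" using s by linarith
  have lnp: "ln p = - r * s" unfolding r_def using sp by simp
  define u where "u = r * s / lam"
  have rc: "r > c" using r r_def by simp
  have u0: "u \<ge> 0" unfolding u_def using rc c sp lam by simp
  have "p powr (- 1 / lam) = exp (u)" unfolding powr_def u_def using p lnp by (simp add: field_simps)
  then have "p powr (- 1 / lam) - 1 \<ge> u + u^2/2" using exp_lower_Taylor_quadratic[OF u0] by simp
  then have "lam / s * (p powr (- 1 / lam) - 1) \<ge> lam / s * (u + u^2/2)"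
    using lam sp by (intro mult_left_mono) auto
  moreover have "lam / s * (u + u^2/2) = r + r^2 * s / (2 * lam)"
    unfolding u_def using lam sp by (simp add: field_simps power2_eq_square)
  moreover have "r^2 * s / (2 * lam) \<ge> c^2 * s0 / (2 * lam)"
  proof -
    have "c^2 \<le> r^2" using rc c by (intro power_mono) auto
    then have "c^2 * s0 \<le> r^2 * s" using s c by (intro mult_mono) auto
    then show ?thesis using lam by (intro divide_right_mono) auto
  qed
  ultimately show ?thesis using rc by linarith
qed

lemma scalar2:
  fixes p s :: real
  assumes "p > 0" "s > 0" "- ln p / s < 0"
  shows "p > 1"
proof -
  have "ln p / s > 0" using assms(3) by simp
  then have "ln p > 0" using assms(2) by (simp add: zero_less_divide_iff)
  then show ?thesis using assms(1) by (simp add: ln_gt_zero_iff)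
qed



theorem proposition3:
  fixes M :: "'a measure" and F :: "real \<Rightarrow> 'a measure" and \<pi> :: "real \<Rightarrow> 'a \<Rightarrow> real"
    and lam t :: real
  assumes "prob_space M"
    and "usual_conditions M F"
    and "pricing_kernel M F \<pi>"
    and "lam > 0" and "t \<ge> 0"
  shows "((AE \<omega> in M. long_exp_rate M F \<pi> t \<omega> > 0) \<longrightarrow>
            (AE \<omega> in M. long_pareto_rate M F \<pi> lam t \<omega> = \<infinity>)) \<and>
         ((AE \<omega> in M. long_pareto_rate M F \<pi> lam t \<omega> < \<infinity>) \<longrightarrow>
            (AE \<omega> in M. long_exp_rate M F \<pi> t \<omega> = 0))"
proof -
  note P = assms(1)
  interpret prob_space M by (rule P)
  have sub: "subalgebra M (F t)" using assms(2,5) unfolding usual_conditions_def by blast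
  interpret finite_measure_subalgebra M "F t" by unfold_locales (rule sub)
  have adap: "\<And>s. s \<ge> 0 \<Longrightarrow> \<pi> s \<in> borel_measurable (F s)"
    and pipos: "\<And>s. s \<ge> 0 \<Longrightarrow> AE \<omega> in M. \<pi> s \<omega> > 0"
    and piint: "\<And>s. s \<ge> 0 \<Longrightarrow> integrable M (\<pi> s)"
    and liminf: "Liminf at_top (\<lambda>s. ereal (integral\<^sup>L M (\<pi> s))) = 0"
    using assms(3) unfolding pricing_kernel_def adapted_def by auto
  have pitm[measurable]: "\<pi> t \<in> borel_measurable (F t)" using adap assms(5) by blast
  have lam: "lam > 0" by fact
  define D where "D = {t<..}"
  define Pb where "Pb T = bond M F \<pi> t T" for T
  define R where "R = (\<lambda>T \<omega>. ereal (exp_rate M F \<pi> t T \<omega>))"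
  define L where "L = (\<lambda>T \<omega>. ereal (pareto_rate M F \<pi> lam t T \<omega>))"
  define S where "S x = fam_ess_sup M (F t) {y\<in>D. x \<le> y} R" for x
  define S' where "S' x = fam_ess_sup M (F t) {y\<in>D. x \<le> y} L" for x
  define Ri where "Ri = fam_ess_inf M (F t) {0..} S"
  define Li where "Li = fam_ess_inf M (F t) {0..} S'"
  have Ri_eq: "long_exp_rate M F \<pi> t = Ri"
    unfolding Ri_def S_def R_def D_def long_exp_rate_def fam_ess_limsup_def ..
  have Li_eq: "long_pareto_rate M F \<pi> lam t = Li"
    unfolding Li_def S'_def L_def D_def long_pareto_rate_def fam_ess_limsup_def ..
  have Rm: "R T \<in> borel_measurable (F t)" for T
    unfolding R_def exp_rate_def bond_def by measurable
  have Lm: "L T \<in> borel_measurable (F t)" for T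
    unfolding L_def pareto_rate_def bond_def by measurable
  have supS: "is_ess_sup M (F t) {y\<in>D. x \<le> y} R (S x)" for x
    unfolding S_def using P sub Rm by (rule fam_sup)
  have supS': "is_ess_sup M (F t) {y\<in>D. x \<le> y} L (S' x)" for x
    unfolding S'_def using P sub Lm by (rule fam_sup)
  have Sm[measurable]: "S x \<in> borel_measurable (F t)" for x using supS[of x] unfolding is_ess_sup_def by blast
  have S'm[measurable]: "S' x \<in> borel_measurable (F t)" for x using supS'[of x] unfolding is_ess_sup_def by blast
  have Sup: "\<And>x y. y \<in> D \<Longrightarrow> x \<le> y \<Longrightarrow> AE \<omega> in M. R y \<omega> \<le> S x \<omega>"
    using supS unfolding is_ess_sup_def by blast
  have Smin: "\<And>x Z. Z \<in> borel_measurable (F t) \<Longrightarrow> (\<forall>y\<in>{y\<in>D. x \<le> y}. AE \<omega> in M. R y \<omega> \<le> Z \<omega>) \<Longrightarrow> AE \<omega> in M. S x \<omega> \<le> Z \<omega>"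
    using supS unfolding is_ess_sup_def by blast
  have S'up: "\<And>x y. y \<in> D \<Longrightarrow> x \<le> y \<Longrightarrow> AE \<omega> in M. L y \<omega> \<le> S' x \<omega>"
    using supS' unfolding is_ess_sup_def by blast
  have S'min: "\<And>x Z. Z \<in> borel_measurable (F t) \<Longrightarrow> (\<forall>y\<in>{y\<in>D. x \<le> y}. AE \<omega> in M. L y \<omega> \<le> Z \<omega>) \<Longrightarrow> AE \<omega> in M. S' x \<omega> \<le> Z \<omega>"
    using supS' unfolding is_ess_sup_def by blast
  have infR: "is_ess_inf M (F t) {0..} S Ri" unfolding Ri_def using P sub Sm by (rule fam_inf)
  have infL: "is_ess_inf M (F t) {0..} S' Li" unfolding Li_def using P sub S'm by (rule fam_inf)
  have Rim[measurable]: "Ri \<in> borel_measurable (F t)" using infR unfolding is_ess_inf_def by blast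
  have Lim[measurable]: "Li \<in> borel_measurable (F t)" using infL unfolding is_ess_inf_def by blast
  have Rilow: "\<And>x. x \<ge> 0 \<Longrightarrow> AE \<omega> in M. Ri \<omega> \<le> S x \<omega>"
    using infR unfolding is_ess_inf_def by auto
  have Rimax: "\<And>Z. Z \<in> borel_measurable (F t) \<Longrightarrow> (\<forall>x\<in>{0..}. AE \<omega> in M. Z \<omega> \<le> S x \<omega>) \<Longrightarrow> AE \<omega> in M. Z \<omega> \<le> Ri \<omega>"
    using infR unfolding is_ess_inf_def by blast
  have Limax: "\<And>Z. Z \<in> borel_measurable (F t) \<Longrightarrow> (\<forall>x\<in>{0..}. AE \<omega> in M. Z \<omega> \<le> S' x \<omega>) \<Longrightarrow> AE \<omega> in M. Z \<omega> \<le> Li \<omega>"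
    using infL unfolding is_ess_inf_def by blast
  have Ppos: "AE \<omega> in M. Pb T \<omega> > 0" if "T > t" for T
  proof -
    have "AE \<omega> in M. real_cond_exp M (F t) (\<pi> T) \<omega> > 0"
      using that assms(5) by (intro real_cond_exp_gr_c piint pipos) auto
    with pipos[OF assms(5)] show ?thesis unfolding Pb_def bond_def
      by eventually_elim simp
  qed
  have K1: "AE \<omega> in M. Ri \<omega> > ereal c \<longrightarrow> Li \<omega> \<ge> ereal (c + c^2 * (n - t) / (2*lam))"
    if c: "c > 0" and n: "n \<ge> 0" "n > t" for c n
  proof -
    define a where "a = c + c^2 * (n - t) / (2*lam)"
    have step: "AE \<omega> in M. Ri \<omega> > ereal c \<longrightarrow> S' x \<omega> > ereal a" if x: "x \<ge> n" for x
    proof -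
      define B where "B = (\<lambda>\<omega>. if S' x \<omega> \<le> ereal a then ereal c else \<infinity>)"
      have Bm: "B \<in> borel_measurable (F t)" unfolding B_def by measurable
      have "\<forall>y\<in>{y\<in>D. x \<le> y}. AE \<omega> in M. R y \<omega> \<le> B \<omega>"
      proof
        fix y assume y: "y \<in> {y\<in>D. x \<le> y}"
        then have yD: "y \<in> D" "x \<le> y" by auto
        then have yt: "y > t" unfolding D_def by auto
        show "AE \<omega> in M. R y \<omega> \<le> B \<omega>"
          using S'up[OF yD] Ppos[OF yt]
        proof eventually_elim
          case (elim \<omega>)
          show ?case
          proof (cases "S' x \<omega> \<le> ereal a")
            case True
            then have Lle: "pareto_rate M F \<pi> lam t y \<omega> \<le> a" using elim(1) unfolding L_def
              by (metis ereal_less_eq(3) order_trans)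
            have "exp_rate M F \<pi> t y \<omega> \<le> c"
            proof (rule ccontr)
              assume "\<not> ?thesis"
              then have h: "- ln (Pb y \<omega>) / (y - t) > c" unfolding exp_rate_def Pb_def by simp
              have "lam / (y - t) * (Pb y \<omega> powr (- 1 / lam) - 1) > c + c^2 * (n - t) / (2 * lam)"
                by (rule scalar1) (use elim(2) x yD n lam c h in auto)
              then show False using Lle unfolding pareto_rate_def Pb_def a_def by simp
            qed
            then show ?thesis using True unfolding B_def R_def by simp
          next
            case False then show ?thesis unfolding B_def by simp
          qed
        qed
      qed
      then have "AE \<omega> in M. S x \<omega> \<le> B \<omega>" by (rule Smin[OF Bm])
      moreover have "AE \<omega> in M. Ri \<omega> \<le> S x \<omega>" using Rilow x n by simp
      ultimately show ?thesis
        by eventually_elim (auto simp: B_def split: if_splits)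
    qed
    define Z where "Z = (\<lambda>\<omega>. if Ri \<omega> > ereal c then ereal a else -\<infinity>)"
    have Zm: "Z \<in> borel_measurable (F t)" unfolding Z_def by measurable
    have "\<forall>x\<in>{0..}. AE \<omega> in M. Z \<omega> \<le> S' x \<omega>"
    proof
      fix x :: real assume "x \<in> {0..}"
      show "AE \<omega> in M. Z \<omega> \<le> S' x \<omega>"
      proof (cases "x \<ge> n")
        case True
        from step[OF True] show ?thesis unfolding Z_def by eventually_elim auto
      next
        case False
        have "AE \<omega> in M. S' n \<omega> \<le> S' x \<omega>"
          using False by (intro S'min S'm) (auto intro: S'up)
        with step[OF order_refl] show ?thesis unfolding Z_def by eventually_elim auto
      qed
    qed
    then have "AE \<omega> in M. Z \<omega> \<le> Li \<omega>" by (rule Limax[OF Zm])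
    then show ?thesis unfolding Z_def a_def by eventually_elim auto
  qed
  have K: "AE \<omega> in M. Ri \<omega> > 0 \<longrightarrow> Li \<omega> = \<infinity>"
  proof -
    have "AE \<omega> in M. \<forall>k::nat. \<forall>m::nat. Ri \<omega> > ereal (1 / real (Suc k)) \<longrightarrow>
        Li \<omega> \<ge> ereal (1 / real (Suc k) + (1 / real (Suc k))^2 * ((max 0 t + 1 + real m) - t) / (2*lam))"
      by (subst AE_all_countable, intro allI, subst AE_all_countable, intro allI, rule K1) auto
    then show ?thesis
    proof eventually_elim
      case (elim \<omega>)
      show ?case
      proof
        assume pos: "Ri \<omega> > 0"
        obtain k :: nat where k: "Ri \<omega> > ereal (1 / real (Suc k))"
        proof (cases "Ri \<omega>")
          case (real r)
          then have "r > 0" using pos by simp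
          then obtain k :: nat where "inverse (real (Suc k)) < r" using reals_Archimedean by blast
          then show ?thesis using that[of k] real by (simp add: field_simps)
        next
          case PInf then show ?thesis using that[of 0] by simp
        next
          case MInf then show ?thesis using pos by simp
        qed
        define c where "c = 1 / real (Suc k)"
        have c0: "c > 0" unfolding c_def by simp
        have bnd: "Li \<omega> \<ge> ereal (c^2 * real m / (2*lam))" for m :: nat
        proof -
          have "Li \<omega> \<ge> ereal (c + c^2 * ((max 0 t + 1 + real m) - t) / (2*lam))"
            using elim k unfolding c_def by blast
          moreover have "c + c^2 * ((max 0 t + 1 + real m) - t) / (2*lam) \<ge> c^2 * real m / (2*lam)"
          proof -
            have "c^2 * real m \<le> c^2 * ((max 0 t + 1 + real m) - t)" using c0 by (intro mult_left_mono) auto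
            then have "c^2 * real m / (2*lam) \<le> c^2 * ((max 0 t + 1 + real m) - t) / (2*lam)"
              using lam by (intro divide_right_mono) auto
            then show ?thesis using c0 by linarith
          qed
          ultimately show ?thesis by (metis ereal_less_eq(3) order_trans)
        qed
        show "Li \<omega> = \<infinity>"
        proof (cases "Li \<omega>")
          case (real v)
          obtain m :: nat where "v * (2*lam) / c^2 < real m" using reals_Archimedean2 by blast
          then have "v < c^2 * real m / (2*lam)" using c0 lam by (simp add: field_simps)
          then show ?thesis using bnd[of m] real by simp
        next
          case MInf then show ?thesis using bnd[of 0] by simp
        qed simp
      qed
    qed
  qed
  have B: "AE \<omega> in M. 0 \<le> Ri \<omega>"
  proof -
    have "\<forall>x\<in>{0..}. AE \<omega> in M. 0 \<le> S x \<omega>"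
    proof
      fix x :: real assume "x \<in> {0..}"
      then have x0: "x \<ge> 0" by simp
      define A where "A = {\<omega> \<in> space M. S x \<omega> < 0}"
      have spG[measurable]: "space M \<in> sets (F t)" using sub sets.top unfolding subalgebra_def by metis
      have AG: "A \<in> sets (F t)" unfolding A_def by measurable
      have AM: "A \<in> sets M" using AG sub unfolding subalgebra_def by blast
      have "A \<in> null_sets M"
      proof (rule ccontr)
        assume nn: "A \<notin> null_sets M"
        define \<delta> where "\<delta> = (\<integral>\<omega>. \<pi> t \<omega> * indicator A \<omega> \<partial>M)"
        have int1: "integrable M (\<lambda>\<omega>. \<pi> t \<omega> * indicator A \<omega>)"
          using integrable_real_mult_indicator[OF AM piint[OF assms(5)]] .
        have nonneg1: "AE \<omega> in M. 0 \<le> \<pi> t \<omega> * indicator A \<omega>"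
          using pipos[OF assms(5)] by eventually_elim (simp add: indicator_def)
        have \<delta>pos: "\<delta> > 0"
        proof (rule ccontr)
          assume "\<not> \<delta> > 0"
          moreover have "\<delta> \<ge> 0" unfolding \<delta>_def using nonneg1 by (rule integral_nonneg_AE)
          ultimately have "\<delta> = 0" by simp
          then have "AE \<omega> in M. \<pi> t \<omega> * indicator A \<omega> = 0"
            using integral_nonneg_eq_0_iff_AE[OF int1 nonneg1] unfolding \<delta>_def by simp
          with pipos[OF assms(5)] have "AE \<omega> in M. \<omega> \<notin> A"
            by eventually_elim (auto simp: indicator_def split: if_splits)
          then show False using nn AE_iff_null_sets[OF AM] by simp
        qed
        obtain T where T: "T \<ge> max x (t+1)" "integral\<^sup>L M (\<pi> T) < \<delta>"
        proof -
          have "\<not> ereal \<delta> \<le> Liminf at_top (\<lambda>s. ereal (integral\<^sup>L M (\<pi> s)))" using liminf \<delta>pos by simp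
          then obtain y where y: "y < ereal \<delta>" "\<not> eventually (\<lambda>s. y < ereal (integral\<^sup>L M (\<pi> s))) at_top"
            unfolding le_Liminf_iff by blast
          then obtain T where T1: "T \<ge> max x (t+1)" "\<not> y < ereal (integral\<^sup>L M (\<pi> T))"
            unfolding eventually_at_top_linorder by blast
          then have "ereal (integral\<^sup>L M (\<pi> T)) < ereal \<delta>" using y(1) by (meson not_less le_less_trans)
          then show ?thesis using that T1(1) by simp
        qed
        have Tt: "T > t" "T \<ge> x" "T \<ge> 0" using T(1) assms(5) by auto
        have TD: "T \<in> D" using Tt unfolding D_def by simp
        define ce where "ce = real_cond_exp M (F t) (\<pi> T)"
        have intT: "integrable M (\<pi> T)" using piint Tt by simp
        have int2: "integrable M (\<lambda>\<omega>. ce \<omega> * indicator A \<omega>)"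
          unfolding ce_def using integrable_real_mult_indicator[OF AM real_cond_exp_int(1)[OF intT]] .
        have int3: "integrable M (\<lambda>\<omega>. \<pi> T \<omega> * indicator A \<omega>)"
          using integrable_real_mult_indicator[OF AM intT] .
        have eqA: "(\<integral>\<omega>. \<pi> T \<omega> * indicator A \<omega> \<partial>M) = (\<integral>\<omega>. ce \<omega> * indicator A \<omega> \<partial>M)"
          using real_cond_exp_intA[OF intT AG] unfolding ce_def set_lebesgue_integral_def
          by (simp add: mult.commute)
        have "AE \<omega> in M. \<pi> t \<omega> * indicator A \<omega> \<le> ce \<omega> * indicator A \<omega>"
          using Sup[OF TD Tt(2)] Ppos[OF Tt(1)] pipos[OF assms(5)]
        proof eventually_elim
          case (elim \<omega>)
          show ?case
          proof (cases "\<omega> \<in> A")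
            case True
            then have "S x \<omega> < 0" unfolding A_def by simp
            then have "R T \<omega> < 0" using elim(1) by (metis le_less_trans)
            then have "- ln (Pb T \<omega>) / (T - t) < 0" unfolding R_def exp_rate_def Pb_def by simp
            then have "Pb T \<omega> > 1" using scalar2[of "Pb T \<omega>" "T - t"] elim(2) Tt by linarith
            then have "ce \<omega> > \<pi> t \<omega>" using elim(3) unfolding Pb_def bond_def ce_def by (simp add: field_simps)
            then show ?thesis using True by simp
          qed simp
        qed
        then have "\<delta> \<le> (\<integral>\<omega>. ce \<omega> * indicator A \<omega> \<partial>M)" unfolding \<delta>_def by (rule integral_mono_AE[OF int1 int2])
        also have "\<dots> = (\<integral>\<omega>. \<pi> T \<omega> * indicator A \<omega> \<partial>M)" using eqA by simp
        also have "\<dots> \<le> integral\<^sup>L M (\<pi> T)"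
          using pipos[OF Tt(3)] by (intro integral_mono_AE int3 intT) (auto elim!: eventually_mono simp: indicator_def)
        finally show False using T(2) by simp
      qed
      then have "AE \<omega> in M. \<omega> \<notin> A" using AE_iff_null_sets[OF AM] by simp
      then show "AE \<omega> in M. 0 \<le> S x \<omega>" using AE_space by eventually_elim (auto simp: A_def not_less)
    qed
    then show ?thesis by (intro Rimax) auto
  qed
  show ?thesis unfolding Ri_eq Li_eq
  proof (intro conjI impI)
    assume "AE \<omega> in M. Ri \<omega> > 0"
    with K show "AE \<omega> in M. Li \<omega> = \<infinity>" by eventually_elim auto
  next
    assume "AE \<omega> in M. Li \<omega> < \<infinity>"
    with K B show "AE \<omega> in M. Ri \<omega> = 0" by eventually_elim (auto simp: not_less)
  qed
qed

end
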